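(* Let $L\in K[D]$ with $\operatorname{Sym}_L=S_1\cdots S_k$ (homogeneous $S_i$), let $g\in K$ be invertible, and let $R$ be a common obstacle to factorization of $L$ of type $(S_1)\cdots(S_k)$. Then $g^{-1}\circ R\circ g$ is a common obstacle to factorization of type $(S_1)\cdots(S_k)$ of the gauge transformed operator $g^{-1}\circ L\circ g$.
   Context: $K$ is a field with commuting derivations $\partial_1,\dots,\partial_n$, and $K[D]=K[D_1,\dots,D_n]$ is the ring of linear differential operators over $K$: the $D_i$ commute with each other and $D_i\circ a=aD_i+\partial_i(a)$ for $a\in K$. Every $L\in K[D]$ is uniquely $\sum_{|J|\le d}a_JD^J$ with $a_J\in K$ and $D^J=D_1^{j_1}\cdots D_n^{j_n}$. The order $\operatorname{ord}(L)$ is the largest $|J|$ with $a_J\ne0$, and $\operatorname{ord}(0)=-\infty$. The symbol $\operatorname{Sym}_L=\sum_{|J|=\operatorname{ord}L}a_JX^J$; note that $\operatorname{Sym}_{g^{-1}\circ L\circ g}=\operatorname{Sym}_L$. A factorization of type $(S_1)\cdots(S_k)$ of an operator $M$ is $M=F_1\circ\cdots\circ F_k$ with $\operatorname{Sym}_{F_i}=S_i$. A common obstacle to factorization of $M$ of type $(S_1)\cdots(S_k)$ is an operator $R$ such that $M-R$ has a factorization of that type and $R$ has the minimal possible order among such operators. *)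

theory Defs
  imports Complex_Main "HOL-Library.Poly_Mapping" "HOL-Library.Extended_Real"
begin

(* Polynomials in K[X_1..X_n] and operators in K[D_1..D_n] are both represented as
   finitely supported maps  multi-index => coefficient.  Only variables 0..n-1 are used. *)
type_synonym mindex = "nat \<Rightarrow>\<^sub>0 nat"
type_synonym 'k mpoly = "mindex \<Rightarrow>\<^sub>0 'k"   (* polynomials, with the convolution product *)
type_synonym 'k dop = "mindex \<Rightarrow>\<^sub>0 'k"

definition mdeg :: "mindex \<Rightarrow> nat" where
  "mdeg J = (\<Sum>i\<in>Poly_Mapping.keys J. Poly_Mapping.lookup J i)"

definition in_vars :: "nat \<Rightarrow> mindex \<Rightarrow> bool" where
  "in_vars n J \<longleftrightarrow> (\<forall>i. n \<le> i \<longrightarrow> Poly_Mapping.lookup J i = 0)"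

definition in_KD :: "nat \<Rightarrow> (mindex \<Rightarrow>\<^sub>0 'k::zero) \<Rightarrow> bool" where
  "in_KD n L \<longleftrightarrow> (\<forall>J\<in>Poly_Mapping.keys L. in_vars n J)"

definition commuting_derivations :: "nat \<Rightarrow> (nat \<Rightarrow> 'k::field \<Rightarrow> 'k) \<Rightarrow> bool" where
  "commuting_derivations n d \<longleftrightarrow>
     (\<forall>i<n. \<forall>a b. d i (a + b) = d i a + d i b) \<and>
     (\<forall>i<n. \<forall>a b. d i (a * b) = a * d i b + d i a * b) \<and>
     (\<forall>i<n. \<forall>j<n. \<forall>a. d i (d j a) = d j (d i a))"

definition dpow :: "nat \<Rightarrow> (nat \<Rightarrow> 'k \<Rightarrow> 'k) \<Rightarrow> mindex \<Rightarrow> 'k \<Rightarrow> 'k" where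
  "dpow n d J = foldr (\<lambda>i f. (d i ^^ Poly_Mapping.lookup J i) \<circ> f) [0..<n] id"

definition mbinom :: "nat \<Rightarrow> mindex \<Rightarrow> mindex \<Rightarrow> nat" where
  "mbinom n J M = (\<Prod>i<n. Poly_Mapping.lookup J i choose Poly_Mapping.lookup M i)"

definition mle :: "mindex \<Rightarrow> mindex \<Rightarrow> bool" where
  "mle M J \<longleftrightarrow> (\<forall>i. Poly_Mapping.lookup M i \<le> Poly_Mapping.lookup J i)"

(* composition in K[D]:  (a_J D^J) o (b_I D^I) = a_J sum_{M <= J} (J choose M) \<partial>^{J-M}(b_I) D^{M+I},
   i.e. the Leibniz rule D_i o a = a D_i + \<partial>_i(a) with commuting D_i, extended bilinearly *)
definition dcomp :: "nat \<Rightarrow> (nat \<Rightarrow> 'k::field \<Rightarrow> 'k) \<Rightarrow> 'k dop \<Rightarrow> 'k dop \<Rightarrow> 'k dop" where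
  "dcomp n d P Q =
     (\<Sum>J\<in>Poly_Mapping.keys P. \<Sum>I\<in>Poly_Mapping.keys Q. \<Sum>M\<in>{M. mle M J}.
        Poly_Mapping.single (M + I) (Poly_Mapping.lookup P J * of_nat (mbinom n J M) * dpow n d (J - M) (Poly_Mapping.lookup Q I)))"

definition scal_op :: "'k::zero \<Rightarrow> 'k dop" where
  "scal_op a = Poly_Mapping.single 0 a"

definition ord :: "'k::zero dop \<Rightarrow> ereal" where
  "ord L = (if L = 0 then -\<infinity> else ereal (real (Max (mdeg ` Poly_Mapping.keys L))))"

definition Sym :: "'k::comm_monoid_add dop \<Rightarrow> 'k mpoly" where
  "Sym L = (\<Sum>J\<in>{J\<in>Poly_Mapping.keys L. mdeg J = Max (mdeg ` Poly_Mapping.keys L)}. Poly_Mapping.single J (Poly_Mapping.lookup L J))"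

definition homogeneous :: "'k::zero mpoly \<Rightarrow> bool" where
  "homogeneous S \<longleftrightarrow> (\<exists>m. \<forall>J\<in>Poly_Mapping.keys S. mdeg J = m)"

definition has_factorization ::
  "nat \<Rightarrow> (nat \<Rightarrow> 'k::field \<Rightarrow> 'k) \<Rightarrow> 'k dop \<Rightarrow> 'k mpoly list \<Rightarrow> bool" where
  "has_factorization n d M Ss \<longleftrightarrow>
     (\<exists>Fs. length Fs = length Ss \<and> (\<forall>F\<in>set Fs. in_KD n F) \<and>
           map Sym Fs = Ss \<and> M = foldr (dcomp n d) Fs (scal_op 1))"

definition common_obstacle ::
  "nat \<Rightarrow> (nat \<Rightarrow> 'k::field \<Rightarrow> 'k) \<Rightarrow> 'k dop \<Rightarrow> 'k mpoly list \<Rightarrow> 'k dop \<Rightarrow> bool" where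
  "common_obstacle n d M Ss R \<longleftrightarrow>
     in_KD n R \<and> has_factorization n d (M - R) Ss \<and>
     (\<forall>R'. in_KD n R' \<and> has_factorization n d (M - R') Ss \<longrightarrow> ord R \<le> ord R')"

definition gauge :: "nat \<Rightarrow> (nat \<Rightarrow> 'k::field \<Rightarrow> 'k) \<Rightarrow> 'k \<Rightarrow> 'k dop \<Rightarrow> 'k dop" where
  "gauge n d g L = dcomp n d (scal_op (inverse g)) (dcomp n d L (scal_op g))"

end

theory Submission
  imports Defs "HOL-Library.Function_Algebras" "HOL-Library.FuncSet"
begin



abbreviation lk where "lk \<equiv> Poly_Mapping.lookup"
abbreviation ky where "ky \<equiv> Poly_Mapping.keys"
abbreviation sg where "sg \<equiv> Poly_Mapping.single"

definition fp :: "nat list \<Rightarrow> (nat \<Rightarrow> 'a \<Rightarrow> 'a) \<Rightarrow> mindex \<Rightarrow> 'a \<Rightarrow> 'a" where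
  "fp xs F J = foldr (\<lambda>i f. (F i ^^ lk J i) \<circ> f) xs id"

lemma fp_Nil[simp]: "fp [] F J = id" by (simp add: fp_def)
lemma fp_Cons[simp]: "fp (i#xs) F J = (F i ^^ lk J i) \<circ> fp xs F J"
  by (simp add: fp_def)

lemma funpow_comm1: "f \<circ> g = g \<circ> f \<Longrightarrow> (f ^^ k) \<circ> g = g \<circ> (f ^^ k)"
proof (induction k)
  case 0 then show ?case by simp
next
  case (Suc k)
  have "(f ^^ Suc k) \<circ> g = f \<circ> ((f ^^ k) \<circ> g)" by (simp add: comp_assoc)
  also have "\<dots> = (f \<circ> g) \<circ> (f ^^ k)" by (simp only: Suc.IH[OF Suc.prems] comp_assoc)
  also have "\<dots> = g \<circ> (f ^^ Suc k)" by (simp only: Suc.prems funpow.simps comp_assoc)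
  finally show ?case .
qed

lemma funpow_comm2: "f \<circ> g = g \<circ> f \<Longrightarrow> (f ^^ k) \<circ> (g ^^ m) = (g ^^ m) \<circ> (f ^^ k)"
  by (metis funpow_comm1)

lemma fp_comm:
  assumes "\<And>j. j \<in> set xs \<Longrightarrow> F i \<circ> F j = F j \<circ> F i"
  shows "(F i ^^ k) \<circ> fp xs F J = fp xs F J \<circ> (F i ^^ k)"
  using assms
proof (induction xs)
  case Nil then show ?case by simp
next
  case (Cons a xs)
  have "(F i ^^ k) \<circ> (F a ^^ lk J a) = (F a ^^ lk J a) \<circ> (F i ^^ k)"
    by (intro funpow_comm2 Cons.prems) simp
  have "(F i ^^ k) \<circ> fp xs F J = fp xs F J \<circ> (F i ^^ k)"
    by (intro Cons.IH Cons.prems) simp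
  note c1 = \<open>(F i ^^ k) \<circ> (F a ^^ lk J a) = _\<close>
  have "(F i ^^ k) \<circ> fp (a#xs) F J = ((F i ^^ k) \<circ> (F a ^^ lk J a)) \<circ> fp xs F J"
    by (simp add: comp_assoc)
  also have "\<dots> = (F a ^^ lk J a) \<circ> ((F i ^^ k) \<circ> fp xs F J)" by (simp only: c1 comp_assoc)
  also have "\<dots> = fp (a#xs) F J \<circ> (F i ^^ k)" by (simp only: \<open>(F i ^^ k) \<circ> fp xs F J = _\<close> fp_Cons comp_assoc)
  finally show ?case .
qed

lemma fp_add:
  assumes "\<And>i j. i \<in> set xs \<Longrightarrow> j \<in> set xs \<Longrightarrow> F i \<circ> F j = F j \<circ> F i"
  shows "fp xs F (J + K) = fp xs F J \<circ> fp xs F K"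
  using assms
proof (induction xs)
  case Nil then show ?case by simp
next
  case (Cons a xs)
  have IH: "fp xs F (J + K) = fp xs F J \<circ> fp xs F K" by (intro Cons.IH Cons.prems) auto
  have c: "(F a ^^ lk K a) \<circ> fp xs F J = fp xs F J \<circ> (F a ^^ lk K a)"
    by (intro fp_comm Cons.prems) auto
  have "fp (a#xs) F (J + K) = (F a ^^ lk J a) \<circ> ((F a ^^ lk K a) \<circ> fp xs F J) \<circ> fp xs F K"
    by (simp add: IH lookup_add funpow_add comp_assoc)
  also have "\<dots> = fp (a#xs) F J \<circ> fp (a#xs) F K" by (simp add: c comp_assoc)
  finally show ?case .
qed

lemma fp_zero: "fp xs F 0 = id" by (induction xs) auto

lemma fp_single:
  assumes "distinct xs" "i \<in> set xs"
  shows "fp xs F (sg i 1) = F i"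
  using assms
proof (induction xs)
  case Nil then show ?case by simp
next
  case (Cons a xs)
  show ?case
  proof (cases "a = i")
    case True
    have "fp xs F (sg i 1) = id"
    proof -
      have "\<And>ys. i \<notin> set ys \<Longrightarrow> fp ys F (sg i 1) = id"
        subgoal for ys by (induction ys) (auto simp: lookup_single)
        done
      then show ?thesis using Cons True by auto
    qed
    then show ?thesis using True by simp
  next
    case False
    then show ?thesis using Cons by (auto simp: lookup_single)
  qed
qed




definition addm :: "('a::ab_group_add \<Rightarrow> 'b::ab_group_add) \<Rightarrow> bool" where
  "addm f \<longleftrightarrow> (\<forall>x y. f (x + y) = f x + f y)"

lemma addm_zero: "addm f \<Longrightarrow> f 0 = 0"
  unfolding addm_def by (metis add_cancel_right_right add_0)

lemma addm_sum: "addm f \<Longrightarrow> f (sum g A) = (\<Sum>x\<in>A. f (g x))"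
  by (induction A rule: infinite_finite_induct) (auto simp: addm_zero addm_def)

lemma addm_diff: "addm f \<Longrightarrow> f (x - y) = f x - f y"
  unfolding addm_def by (metis add_diff_cancel diff_add_cancel eq_diff_eq)

lemma addm_comp: "addm f \<Longrightarrow> addm g \<Longrightarrow> addm (f \<circ> g)"
  unfolding addm_def by simp

lemma addm_id: "addm id" unfolding addm_def by simp

lemma addm_funpow: "addm (f::'a::ab_group_add \<Rightarrow> 'a) \<Longrightarrow> addm (f ^^ k)"
  unfolding addm_def by (induction k) auto

lemma addm_fp: "(\<And>i. i \<in> set xs \<Longrightarrow> addm (F i :: 'a::ab_group_add \<Rightarrow> 'a)) \<Longrightarrow> addm (fp xs F J)"
  by (induction xs) (auto simp: addm_id addm_comp addm_funpow)

definition mulv :: "'k::field \<Rightarrow> (mindex \<Rightarrow> 'k::field) \<Rightarrow> (mindex \<Rightarrow> 'k::field)" where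
  "mulv b v = (\<lambda>I. b * v I)"

definition Dv :: "(nat \<Rightarrow> 'k::field \<Rightarrow> 'k) \<Rightarrow> nat \<Rightarrow> (mindex \<Rightarrow> 'k) \<Rightarrow> (mindex \<Rightarrow> 'k)" where
  "Dv d i v = (\<lambda>I. d i (v I) + v (I + sg i 1))"

definition DJ :: "nat \<Rightarrow> (nat \<Rightarrow> 'k::field \<Rightarrow> 'k) \<Rightarrow> mindex \<Rightarrow> (mindex \<Rightarrow> 'k) \<Rightarrow> (mindex \<Rightarrow> 'k)" where
  "DJ n d J = fp [0..<n] (Dv d) J"

definition ee :: "mindex \<Rightarrow> mindex \<Rightarrow> mindex \<Rightarrow> 'k::field" where
  "ee A I = (\<lambda>K. if K + A = I then 1 else 0)"

lemma sum_app: "(sum f A) x = (\<Sum>a\<in>A. f a x)"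
  by (induction A rule: infinite_finite_induct) auto

context
  fixes n :: nat and d :: "nat \<Rightarrow> 'k::field \<Rightarrow> 'k"
  assumes cd: "commuting_derivations n d"
begin

lemma d_add: "i < n \<Longrightarrow> d i (a + b) = d i a + d i b"
  using cd unfolding commuting_derivations_def by blast
lemma d_mult: "i < n \<Longrightarrow> d i (a * b) = a * d i b + d i a * b"
  using cd unfolding commuting_derivations_def by blast
lemma d_comm: "i < n \<Longrightarrow> j < n \<Longrightarrow> d i (d j a) = d j (d i a)"
  using cd unfolding commuting_derivations_def by blast

lemma d_addm: "i < n \<Longrightarrow> addm (d i)"
  unfolding addm_def using d_add by blast

lemma d_zero: "i < n \<Longrightarrow> d i 0 = 0"
  using addm_zero d_addm by blast

lemma d_one: "i < n \<Longrightarrow> d i 1 = 0"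
proof -
  assume i: "i < n"
  have "d i 1 = d i 1 + d i 1" using d_mult[OF i, of 1 1] by simp
  then show ?thesis by (metis add_cancel_right_right)
qed

lemma d_of_nat: "i < n \<Longrightarrow> d i (of_nat c) = 0"
  by (induction c) (auto simp: d_zero d_one d_add)

lemma d_of_nat_mult: "i < n \<Longrightarrow> d i (of_nat c * a) = of_nat c * d i a"
  by (simp add: d_mult d_of_nat)

lemma d_comp_comm: "i \<in> set [0..<n] \<Longrightarrow> j \<in> set [0..<n] \<Longrightarrow> d i \<circ> d j = d j \<circ> d i"
  by (auto simp: fun_eq_iff d_comm)

lemma dpow_fp: "dpow n d J = fp [0..<n] d J"
  by (simp add: dpow_def fp_def)

lemma dpow_add: "dpow n d (J + K) = dpow n d J \<circ> dpow n d K"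
  unfolding dpow_fp by (rule fp_add) (rule d_comp_comm)

lemma dpow_single: "i < n \<Longrightarrow> dpow n d (sg i 1) = d i"
  unfolding dpow_fp by (rule fp_single) auto

lemma dpow_zero: "dpow n d 0 = id"
  unfolding dpow_fp by (rule fp_zero)




lemma Dv_addm: "i < n \<Longrightarrow> addm (Dv d i)"
  unfolding addm_def Dv_def by (auto simp: fun_eq_iff d_add)

lemma Dv_comm: "i < n \<Longrightarrow> j < n \<Longrightarrow> Dv d i \<circ> Dv d j = Dv d j \<circ> Dv d i"
  unfolding Dv_def by (auto simp: fun_eq_iff d_add d_comm add_ac)

lemma DJ_addm: "addm (DJ n d J)"
  unfolding DJ_def by (rule addm_fp) (auto simp: Dv_addm)

lemma DJ_add: "DJ n d (J + K) = DJ n d J \<circ> DJ n d K"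
  unfolding DJ_def by (rule fp_add) (auto simp: Dv_comm)

lemma DJ_zero: "DJ n d 0 = id"
  unfolding DJ_def by (rule fp_zero)

lemma DJ_single: "i < n \<Longrightarrow> DJ n d (sg i 1) = Dv d i"
  unfolding DJ_def by (rule fp_single) auto

lemma DJ_step: "i < n \<Longrightarrow> DJ n d (J + sg i 1) = Dv d i \<circ> DJ n d J"
  by (metis DJ_add DJ_single add.commute)

lemma dpow_step: "i < n \<Longrightarrow> dpow n d (J + sg i 1) = d i \<circ> dpow n d J"
  by (metis dpow_add dpow_single add.commute)

lemma Dv_leibniz: "i < n \<Longrightarrow> Dv d i (mulv b w) = mulv (d i b) w + mulv b (Dv d i w)"
  unfolding Dv_def mulv_def by (auto simp: fun_eq_iff d_mult algebra_simps)

end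

lemma mulv_addm: "addm (mulv b)"
  unfolding addm_def mulv_def by (auto simp: fun_eq_iff algebra_simps)

lemma mulv_mulv: "mulv a (mulv b w) = mulv (a * b) w"
  unfolding mulv_def by (auto simp: fun_eq_iff)

lemma mulv_add: "mulv (a + b) w = mulv a w + mulv b w"
  unfolding mulv_def by (auto simp: fun_eq_iff algebra_simps)

lemma mulv_0[simp]: "mulv 0 w = 0"
  unfolding mulv_def by (auto simp: fun_eq_iff)

lemma mulv_1[simp]: "mulv 1 w = w"
  unfolding mulv_def by (auto simp: fun_eq_iff)

lemma mulv_sum: "mulv a (sum f A) = (\<Sum>x\<in>A. mulv a (f x))"
  by (rule addm_sum[OF mulv_addm])

lemma mulv_sum_left: "mulv (sum f A) w = (\<Sum>x\<in>A. mulv (f x) w)"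
  by (induction A rule: infinite_finite_induct) (auto simp: mulv_add)




lemma mle_iff: "mle M J \<longleftrightarrow> (\<forall>i. lk M i \<le> lk J i)" by (simp add: mle_def)

lemma finite_mle: "finite {M. mle M J}"
proof -
  let ?f = "\<lambda>M::mindex. restrict (lk M) (ky J)"
  have sub: "?f ` {M. mle M J} \<subseteq> PiE (ky J) (\<lambda>i. {..lk J i})"
    by (auto simp: mle_def PiE_def extensional_def)
  have "inj_on ?f {M. mle M J}"
  proof (rule inj_onI)
    fix M M' assume M: "M \<in> {M. mle M J}" and M': "M' \<in> {M. mle M J}" and e: "?f M = ?f M'"
    show "M = M'"
    proof (rule poly_mapping_eqI)
      fix i show "lk M i = lk M' i"
      proof (cases "i \<in> ky J")
        case True then show ?thesis using e by (metis restrict_apply')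
      next
        case False
        then have "lk J i = 0" by (simp add: in_keys_iff)
        then show ?thesis using M M' by (auto simp: mle_def) (metis le_zero_eq)
      qed
    qed
  qed
  moreover have "finite (?f ` {M. mle M J})"
    by (rule finite_subset[OF sub]) (rule finite_PiE, auto)
  ultimately show ?thesis using finite_imageD by blast
qed

lemma in_vars_add: "in_vars n A \<Longrightarrow> in_vars n B \<Longrightarrow> in_vars n (A + B)"
  by (simp add: in_vars_def lookup_add)

lemma in_vars_single: "i < n \<Longrightarrow> in_vars n (sg i 1)"
  by (simp add: in_vars_def lookup_single)

lemma in_vars_mle: "mle M J \<Longrightarrow> in_vars n J \<Longrightarrow> in_vars n M"
  by (auto simp: in_vars_def mle_def) (metis le_zero_eq)

lemma in_vars_zero: "in_vars n 0" by (simp add: in_vars_def)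

lemma mindex_induct[consumes 1, case_names zero step]:
  assumes "in_vars n J" "P 0"
    "\<And>J i. in_vars n J \<Longrightarrow> i < n \<Longrightarrow> P J \<Longrightarrow> P (J + sg i 1)"
  shows "P J"
  using assms(1)
proof (induction "\<Sum>k<n. lk J k" arbitrary: J rule: less_induct)
  case less
  show ?case
  proof (cases "J = 0")
    case True then show ?thesis using assms(2) by simp
  next
    case False
    then obtain i where i: "lk J i \<noteq> 0" by (metis poly_mapping_eqI lookup_zero)
    then have "i < n" using less.prems unfolding in_vars_def by (meson not_le)
    define J' where "J' = J - sg i 1"
    have JJ: "J = J' + sg i 1"
      by (rule poly_mapping_eqI) (use i in \<open>auto simp: J'_def lookup_add lookup_minus lookup_single when_def\<close>)
    have v: "in_vars n J'" using less.prems by (auto simp: in_vars_def J'_def lookup_minus)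
    have "(\<Sum>k<n. lk J k) = (\<Sum>k<n. lk J' k) + (\<Sum>k<n. lk (sg i 1) k)"
      by (subst JJ) (simp add: lookup_add sum.distrib)
    also have "(\<Sum>k<n. lk (sg i 1) k) = 1"
      using \<open>i < n\<close> by (simp add: lookup_single when_def sum.delta)
    finally have "(\<Sum>k<n. lk J' k) < (\<Sum>k<n. lk J k)" by simp
    then have "P J'" using less.hyps v by blast
    then show ?thesis using assms(3)[OF v \<open>i < n\<close>] JJ by simp
  qed
qed

lemma mbinom_refl: "mbinom n J J = 1" by (simp add: mbinom_def)

lemma mbinom_zero:
  assumes "in_vars n M" "\<not> mle M J"
  shows "mbinom n J M = 0"
proof -
  obtain k where k: "lk M k > lk J k" using assms(2) by (auto simp: mle_def not_le)
  then have "lk M k \<noteq> 0" by auto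
  then have "k < n" using assms(1) unfolding in_vars_def by (meson not_le)
  then show ?thesis unfolding mbinom_def using k
    by (intro prod_zero) auto
qed

lemma mbinom_pascal:
  assumes "i < n"
  shows "mbinom n (J + sg i 1) M =
    mbinom n J M + (if 0 < lk M i then mbinom n J (M - sg i 1) else 0)"
proof -
  let ?R = "{..<n} - {i}"
  have split: "\<And>f. (\<Prod>k<n. f k) = f i * (\<Prod>k\<in>?R. f k :: nat)"
    using assms by (metis finite_lessThan lessThan_iff prod.remove)
  have o1: "(\<Prod>k\<in>?R. lk (J + sg i 1) k choose lk M k) = (\<Prod>k\<in>?R. lk J k choose lk M k)"
    by (rule prod.cong) (auto simp: lookup_add lookup_single)
  have o2: "(\<Prod>k\<in>?R. lk J k choose lk (M - sg i 1) k) = (\<Prod>k\<in>?R. lk J k choose lk M k)"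
    by (rule prod.cong) (auto simp: lookup_minus lookup_single)
  show ?thesis
  proof (cases "0 < lk M i")
    case True
    then obtain m where m: "lk M i = Suc m" by (metis gr0_implies_Suc)
    have "lk (M - sg i 1) i = m" by (simp add: lookup_minus m)
    then show ?thesis unfolding mbinom_def split o1 o2 using True
      by (simp add: lookup_add m algebra_simps)
  next
    case False
    then show ?thesis unfolding mbinom_def split o1 by (simp add: lookup_add)
  qed
qed




lemma mle_zero_iff: "mle M 0 \<longleftrightarrow> M = 0"
  by (auto simp: mle_def poly_mapping_eq_iff fun_eq_iff)

lemma S_zero: "{M. mle M 0} = {0}" by (auto simp: mle_zero_iff)

lemma sub_step: "mle M J \<Longrightarrow> (J + sg i 1) - M = (J - M) + sg i 1"
  by (rule poly_mapping_eqI) (auto simp: mle_def lookup_add lookup_minus lookup_single when_def)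

lemma sub_step2: "(J + sg i 1) - (M + sg i 1) = J - M"
  by (rule poly_mapping_eqI) (auto simp: lookup_add lookup_minus lookup_single when_def)

lemma sub_step3: "M + sg i 1 - sg i 1 = M"
  by (rule poly_mapping_eqI) (auto simp: lookup_add lookup_minus lookup_single when_def)

lemma mle_step: "mle M J \<Longrightarrow> mle M (J + sg i 1)"
  by (auto simp: mle_def lookup_add) (metis le_add1 order_trans)

lemma S_image: "{M. mle M (J + sg i 1) \<and> 0 < lk M i} = (\<lambda>M. M + sg i 1) ` {M. mle M J}"
proof (intro set_eqI iffI)
  fix M assume M: "M \<in> {M. mle M (J + sg i 1) \<and> 0 < lk M i}"
  have eq: "M = (M - sg i 1) + sg i 1"
    by (rule poly_mapping_eqI) (use M in \<open>auto simp: lookup_add lookup_minus lookup_single when_def\<close>)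
  have h: "\<And>k. lk M k \<le> lk J k + lk (sg i 1) k" using M by (auto simp: mle_def lookup_add)
  have "mle (M - sg i 1) J"
    unfolding mle_def
  proof
    fix k show "lk (M - sg i 1) k \<le> lk J k"
      using h[of k] by (auto simp: lookup_minus lookup_single when_def)
  qed
  then show "M \<in> (\<lambda>M. M + sg i 1) ` {M. mle M J}" using eq by blast
next
  fix M assume "M \<in> (\<lambda>M. M + sg i 1) ` {M. mle M J}"
  then show "M \<in> {M. mle M (J + sg i 1) \<and> 0 < lk M i}"
    by (auto simp: mle_def lookup_add lookup_single)
qed

context
  fixes n :: nat and d :: "nat \<Rightarrow> 'k::field \<Rightarrow> 'k"
  assumes cd: "commuting_derivations n d"
begin

lemma leibniz:
  assumes "in_vars n J"
  shows "DJ n d J (mulv b w) =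
    (\<Sum>M\<in>{M. mle M J}. mulv (of_nat (mbinom n J M) * dpow n d (J - M) b) (DJ n d M w))"
  using assms
proof (induction J rule: mindex_induct)
  case zero
  show ?case by (simp add: S_zero DJ_zero[OF cd] dpow_zero[OF cd] mbinom_refl)
next
  case (step J i)
  let ?e = "sg i 1" and ?J1 = "J + sg i 1"
  let ?c = "\<lambda>J M. of_nat (mbinom n J M) :: 'k"
  let ?p = "dpow n d"
  have fin: "finite {M. mle M J}" by (rule finite_mle)
  have fin1: "finite {M. mle M ?J1}" by (rule finite_mle)
  have "DJ n d ?J1 (mulv b w) = Dv d i (DJ n d J (mulv b w))"
    using DJ_step[OF cd step(2)] by simp
  also have "\<dots> = (\<Sum>M\<in>{M. mle M J}. Dv d i (mulv (?c J M * ?p (J - M) b) (DJ n d M w)))"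
    unfolding step(3) by (rule addm_sum[OF Dv_addm[OF cd step(2)]])
  also have "\<dots> = (\<Sum>M\<in>{M. mle M J}. mulv (?c J M * ?p (?J1 - M) b) (DJ n d M w))
      + (\<Sum>M\<in>{M. mle M J}. mulv (?c J M * ?p (J - M) b) (DJ n d (M + ?e) w))"
    unfolding sum.distrib[symmetric]
  proof (rule sum.cong[OF refl])
    fix M assume M: "M \<in> {M. mle M J}"
    show "Dv d i (mulv (?c J M * ?p (J - M) b) (DJ n d M w)) =
      mulv (?c J M * ?p (?J1 - M) b) (DJ n d M w) + mulv (?c J M * ?p (J - M) b) (DJ n d (M + ?e) w)"
    proof -
      have e1: "?p (?J1 - M) b = d i (?p (J - M) b)"
      proof -
        have "mle M J" using M by simp
        then have "?J1 - M = (J - M) + ?e" by (rule sub_step)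
        then show ?thesis by (simp only: dpow_step[OF cd step(2)]) simp
      qed
      have e2: "DJ n d (M + ?e) w = Dv d i (DJ n d M w)"
        by (simp only: DJ_step[OF cd step(2)]) simp
      show ?thesis unfolding e1 e2
        by (simp add: Dv_leibniz[OF cd step(2)] d_of_nat_mult[OF cd step(2)])
    qed
  qed
  also have "\<dots> = (\<Sum>M\<in>{M. mle M ?J1}. mulv (?c ?J1 M * ?p (?J1 - M) b) (DJ n d M w))"
  proof -
    have A: "(\<Sum>M\<in>{M. mle M ?J1}. mulv (?c J M * ?p (?J1 - M) b) (DJ n d M w))
        = (\<Sum>M\<in>{M. mle M J}. mulv (?c J M * ?p (?J1 - M) b) (DJ n d M w))"
    proof (rule sum.mono_neutral_right[OF fin1])
      show "{M. mle M J} \<subseteq> {M. mle M ?J1}" using mle_step by blast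
      show "\<forall>M\<in>{M. mle M ?J1} - {M. mle M J}. mulv (?c J M * ?p (?J1 - M) b) (DJ n d M w) = 0"
      proof
        fix M assume "M \<in> {M. mle M ?J1} - {M. mle M J}"
        then have "in_vars n M" "\<not> mle M J"
          using in_vars_mle in_vars_add[OF step(1) in_vars_single[OF step(2)]] by auto
        then show "mulv (?c J M * ?p (?J1 - M) b) (DJ n d M w) = 0" by (simp add: mbinom_zero)
      qed
    qed
    have B: "(\<Sum>M\<in>{M. mle M ?J1}. mulv ((if 0 < lk M i then ?c J (M - ?e) else 0) * ?p (?J1 - M) b) (DJ n d M w))
        = (\<Sum>M\<in>{M. mle M J}. mulv (?c J M * ?p (J - M) b) (DJ n d (M + ?e) w))"
    proof -
      have "(\<Sum>M\<in>{M. mle M ?J1}. mulv ((if 0 < lk M i then ?c J (M - ?e) else 0) * ?p (?J1 - M) b) (DJ n d M w))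
          = (\<Sum>M\<in>{M. mle M ?J1 \<and> 0 < lk M i}. mulv (?c J (M - ?e) * ?p (?J1 - M) b) (DJ n d M w))"
        by (rule sum.mono_neutral_cong_right[OF fin1]) auto
      also have "\<dots> = (\<Sum>M\<in>(\<lambda>M. M + ?e) ` {M. mle M J}. mulv (?c J (M - ?e) * ?p (?J1 - M) b) (DJ n d M w))"
        by (simp only: S_image)
      also have "\<dots> = (\<Sum>M\<in>{M. mle M J}. mulv (?c J M * ?p (J - M) b) (DJ n d (M + ?e) w))"
        by (subst sum.reindex) (auto simp: inj_on_def sub_step2 sub_step3)
      finally show ?thesis .
    qed
    have "(\<Sum>M\<in>{M. mle M ?J1}. mulv (?c ?J1 M * ?p (?J1 - M) b) (DJ n d M w))
       = (\<Sum>M\<in>{M. mle M ?J1}. mulv (?c J M * ?p (?J1 - M) b) (DJ n d M w)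
           + mulv ((if 0 < lk M i then ?c J (M - ?e) else 0) * ?p (?J1 - M) b) (DJ n d M w))"
      by (rule sum.cong[OF refl], simp only: mbinom_pascal[OF step(2)]) (simp add: mulv_add[symmetric] algebra_simps)
    also have "\<dots> = (\<Sum>M\<in>{M. mle M J}. mulv (?c J M * ?p (?J1 - M) b) (DJ n d M w))
      + (\<Sum>M\<in>{M. mle M J}. mulv (?c J M * ?p (J - M) b) (DJ n d (M + ?e) w))"
      by (simp only: sum.distrib A B)
    finally show ?thesis by simp
  qed
  finally show ?case .
qed

end




definition act :: "nat \<Rightarrow> (nat \<Rightarrow> 'k::field \<Rightarrow> 'k) \<Rightarrow> 'k dop \<Rightarrow> (mindex \<Rightarrow> 'k) \<Rightarrow> (mindex \<Rightarrow> 'k)" where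
  "act n d P v = (\<Sum>J\<in>ky P. mulv (lk P J) (DJ n d J v))"

lemma act_superset:
  assumes "finite T" "ky P \<subseteq> T"
  shows "act n d P v = (\<Sum>J\<in>T. mulv (lk P J) (DJ n d J v))"
  unfolding act_def
  by (rule sum.mono_neutral_left[OF assms(1,2)]) (auto simp: in_keys_iff)

lemma act_add: "act n d (P + Q) v = act n d P v + act n d Q v"
proof -
  have T: "finite (ky P \<union> ky Q)" by simp
  have 1: "act n d (P + Q) v = (\<Sum>J\<in>ky P \<union> ky Q. mulv (lk (P + Q) J) (DJ n d J v))"
    by (rule act_superset[OF T]) (use keys_add[of P Q] in auto)
  have 2: "act n d P v = (\<Sum>J\<in>ky P \<union> ky Q. mulv (lk P J) (DJ n d J v))"
    by (rule act_superset[OF T]) auto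
  have 3: "act n d Q v = (\<Sum>J\<in>ky P \<union> ky Q. mulv (lk Q J) (DJ n d J v))"
    by (rule act_superset[OF T]) auto
  show ?thesis unfolding 1 2 3 by (simp add: lookup_add mulv_add sum.distrib)
qed

lemma act_zero[simp]: "act n d 0 v = 0" by (simp add: act_def)

lemma act_sum: "act n d (sum f A) v = (\<Sum>x\<in>A. act n d (f x) v)"
  by (induction A rule: infinite_finite_induct) (auto simp: act_add)

lemma act_single: "act n d (sg K c) v = mulv c (DJ n d K v)"
  by (simp add: act_def)

lemma act_diff: "act n d (P - Q) v = act n d P v - act n d Q v"
  using act_add[of n d "P - Q" Q v] by (simp add: algebra_simps)

lemma in_KD_sum: "(\<And>x. x \<in> A \<Longrightarrow> in_KD n (f x)) \<Longrightarrow> in_KD n (sum f A)"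
  unfolding in_KD_def
proof
  fix J assume "(\<And>x. x \<in> A \<Longrightarrow> \<forall>J\<in>ky (f x). in_vars n J)" "J \<in> ky (sum f A)"
  then show "in_vars n J" using keys_sum[of f A] by auto
qed

lemma in_KD_single: "in_vars n K \<Longrightarrow> in_KD n (sg K c)"
  by (simp add: in_KD_def)

lemma in_KD_add: "in_KD n P \<Longrightarrow> in_KD n Q \<Longrightarrow> in_KD n (P + Q)"
  unfolding in_KD_def using keys_add[of P Q] by auto

lemma in_KD_diff: "in_KD n P \<Longrightarrow> in_KD n Q \<Longrightarrow> in_KD n (P - Q)"
  unfolding in_KD_def using keys_diff[of P Q] by auto

lemma in_KD_scal: "in_KD n (scal_op c)"
  by (simp add: scal_op_def in_KD_single in_vars_zero)

lemma in_KD_dcomp: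
  assumes P: "in_KD n P" and Q: "in_KD n Q" shows "in_KD n (dcomp n d P Q)"
  unfolding dcomp_def
proof (intro in_KD_sum in_KD_single)
  fix J I M assume J: "J \<in> ky P" and I: "I \<in> ky Q" and M: "M \<in> {M. mle M J}"
  have "in_vars n J" "in_vars n I" using J I P Q by (auto simp: in_KD_def)
  then show "in_vars n (M + I)" using M in_vars_mle in_vars_add by blast
qed

context
  fixes n :: nat and d :: "nat \<Rightarrow> 'k::field \<Rightarrow> 'k"
  assumes cd: "commuting_derivations n d"
begin

lemma act_scal: "act n d (scal_op c) v = mulv c v"
  by (simp add: scal_op_def act_single DJ_zero[OF cd])

lemma act_dcomp:
  assumes P: "in_KD n P"
  shows "act n d (dcomp n d P Q) v = act n d P (act n d Q v)"
proof -
  let ?c = "\<lambda>J M. of_nat (mbinom n J M) :: 'k"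
  let ?p = "dpow n d"
  have "act n d (dcomp n d P Q) v = (\<Sum>J\<in>ky P. \<Sum>I\<in>ky Q. \<Sum>M\<in>{M. mle M J}.
      mulv (lk P J * ?c J M * ?p (J - M) (lk Q I)) (DJ n d (M + I) v))"
    by (simp add: dcomp_def act_sum act_single)
  also have "\<dots> = (\<Sum>J\<in>ky P. mulv (lk P J) (DJ n d J (\<Sum>I\<in>ky Q. mulv (lk Q I) (DJ n d I v))))"
  proof (rule sum.cong[OF refl])
    fix J assume J: "J \<in> ky P"
    then have vJ: "in_vars n J" using P by (simp add: in_KD_def)
    have "DJ n d J (\<Sum>I\<in>ky Q. mulv (lk Q I) (DJ n d I v)) =
        (\<Sum>I\<in>ky Q. DJ n d J (mulv (lk Q I) (DJ n d I v)))"
      by (rule addm_sum[OF DJ_addm[OF cd]])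
    also have "\<dots> = (\<Sum>I\<in>ky Q. \<Sum>M\<in>{M. mle M J}. mulv (?c J M * ?p (J - M) (lk Q I)) (DJ n d (M + I) v))"
      by (rule sum.cong[OF refl]) (simp add: leibniz[OF cd vJ] DJ_add[OF cd])
    finally show "(\<Sum>I\<in>ky Q. \<Sum>M\<in>{M. mle M J}.
      mulv (lk P J * ?c J M * ?p (J - M) (lk Q I)) (DJ n d (M + I) v)) =
      mulv (lk P J) (DJ n d J (\<Sum>I\<in>ky Q. mulv (lk Q I) (DJ n d I v)))"
      by (simp add: mulv_sum mulv_mulv mult.assoc)
  qed
  also have "\<dots> = act n d P (act n d Q v)" by (simp add: act_def)
  finally show ?thesis .
qed


lemma Dv_ee: "i < n \<Longrightarrow> Dv d i (ee A I) = ee (A + sg i 1) I"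
  by (auto simp: Dv_def ee_def fun_eq_iff d_zero[OF cd] d_one[OF cd] add_ac)

lemma DJ_ee: "in_vars n J \<Longrightarrow> DJ n d J (ee 0 I) = ee J I"
proof (induction J rule: mindex_induct)
  case zero then show ?case by (simp add: DJ_zero[OF cd])
next
  case (step J i)
  then show ?case by (simp only: DJ_step[OF cd step(2)] Dv_ee[OF step(2)] comp_apply)
qed

lemma act_ee: "in_KD n P \<Longrightarrow> act n d P (ee 0 I) 0 = lk P I"
proof -
  assume P: "in_KD n P"
  have "act n d P (ee 0 I) 0 = (\<Sum>J\<in>ky P. lk P J * (if J = I then 1 else 0))"
    unfolding act_def sum_app
  proof (rule sum.cong[OF refl])
    fix J assume "J \<in> ky P"
    then have vJ: "in_vars n J" using P by (simp add: in_KD_def)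
    show "mulv (lk P J) (DJ n d J (ee 0 I)) 0 = lk P J * (if J = I then 1 else 0)"
      unfolding DJ_ee[OF vJ] by (simp add: mulv_def ee_def)
  qed
  also have "\<dots> = (\<Sum>J\<in>ky P. if J = I then lk P I else 0)"
    by (rule sum.cong) auto
  also have "\<dots> = lk P I"
    by (subst sum.delta) (auto simp: in_keys_iff)
  finally show ?thesis .
qed

lemma faithful:
  assumes "in_KD n P" "in_KD n Q" "\<And>v. act n d P v = act n d Q v"
  shows "P = Q"
  by (rule poly_mapping_eqI) (metis assms act_ee)

end




lemma mdeg_alt: "ky K \<subseteq> A \<Longrightarrow> finite A \<Longrightarrow> mdeg K = (\<Sum>i\<in>A. lk K i)"
  unfolding mdeg_def by (rule sum.mono_neutral_left) (auto simp: in_keys_iff)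

lemma mle_keys: "mle K J \<Longrightarrow> ky K \<subseteq> ky J"
  by (auto simp: mle_def in_keys_iff) (meson order_less_le_trans)

lemma mdeg_mono: "mle K J \<Longrightarrow> mdeg K \<le> mdeg J"
  using mdeg_alt[OF mle_keys, of K J] by (simp add: mdeg_def sum_mono mle_def)

lemma mdeg_eq: assumes "mle K J" "mdeg K = mdeg J" shows "K = J"
proof (rule ccontr)
  assume "K \<noteq> J"
  then obtain i where i: "lk K i \<noteq> lk J i" by (metis poly_mapping_eqI)
  then have lt: "lk K i < lk J i" using assms(1) by (auto simp: mle_def le_less)
  then have "i \<in> ky J" by (simp add: in_keys_iff)
  have "mdeg K = (\<Sum>i\<in>ky J. lk K i)" by (rule mdeg_alt[OF mle_keys[OF assms(1)]]) simp
  also have "\<dots> < (\<Sum>i\<in>ky J. lk J i)"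
    by (rule sum_strict_mono_ex1) (use assms(1) lt \<open>i \<in> ky J\<close> in \<open>auto simp: mle_def\<close>)
  finally show False using assms(2) by (simp add: mdeg_def)
qed

lemma sym_ord_eq:
  fixes X Z :: "'k::comm_monoid_add dop"
  assumes X: "X \<noteq> 0" and m: "m = Max (mdeg ` ky X)"
    and hi: "\<And>K. m < mdeg K \<Longrightarrow> lk Z K = 0"
    and top: "\<And>K. mdeg K = m \<Longrightarrow> lk Z K = lk X K"
  shows "Sym Z = Sym X \<and> ord Z = ord X"
proof -
  have ne: "ky X \<noteq> {}" using X by simp
  have "m \<in> mdeg ` ky X" unfolding m by (rule Max_in) (use ne in auto)
  then obtain K0 where K0: "K0 \<in> ky X" "mdeg K0 = m" by auto
  then have "K0 \<in> ky Z" using top[of K0] by (simp add: in_keys_iff)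
  have le: "\<And>K. K \<in> ky Z \<Longrightarrow> mdeg K \<le> m" using hi by (meson in_keys_iff not_le)
  have mZ: "Max (mdeg ` ky Z) = m"
    by (rule Max_eqI) (use le \<open>K0 \<in> ky Z\<close> K0 in auto)
  have Z: "Z \<noteq> 0" using \<open>K0 \<in> ky Z\<close> by auto
  have sets: "{J\<in>ky Z. mdeg J = m} = {J\<in>ky X. mdeg J = m}"
    using top by (auto simp: in_keys_iff)
  have "Sym Z = Sym X"
    unfolding Sym_def mZ m[symmetric] sets by (rule sum.cong[OF refl]) (simp add: top)
  moreover have "ord Z = ord X" unfolding ord_def using X Z mZ m by simp
  ultimately show ?thesis by simp
qed

context
  fixes n :: nat and d :: "nat \<Rightarrow> 'k::field \<Rightarrow> 'k"
  assumes cd: "commuting_derivations n d"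
begin

lemma in_KD_gauge: "in_KD n X \<Longrightarrow> in_KD n (gauge n d g X)"
  unfolding gauge_def by (intro in_KD_dcomp in_KD_scal)

lemma act_gauge: "in_KD n X \<Longrightarrow> act n d (gauge n d g X) v = mulv (inverse g) (act n d X (mulv g v))"
  unfolding gauge_def
  by (simp add: act_dcomp[OF cd] in_KD_scal in_KD_dcomp act_scal[OF cd])

lemma mulv_inv: "g \<noteq> 0 \<Longrightarrow> mulv g (mulv (inverse g) w) = w"
  by (simp add: mulv_mulv)

lemma mulv_inv2: "g \<noteq> 0 \<Longrightarrow> mulv (inverse g) (mulv g w) = w"
  by (simp add: mulv_mulv)

lemma gauge_diff:
  assumes "in_KD n X" "in_KD n Y"
  shows "gauge n d g (X - Y) = gauge n d g X - gauge n d g Y"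
  by (rule faithful[OF cd])
     (auto simp: assms in_KD_gauge in_KD_diff act_gauge act_diff addm_diff[OF mulv_addm])

lemma gauge_dcomp:
  assumes "g \<noteq> 0" "in_KD n A" "in_KD n B"
  shows "gauge n d g (dcomp n d A B) = dcomp n d (gauge n d g A) (gauge n d g B)"
  by (rule faithful[OF cd])
     (auto simp: assms in_KD_gauge in_KD_dcomp act_gauge act_dcomp[OF cd] mulv_inv)

lemma gauge_one:
  assumes "g \<noteq> 0"
  shows "gauge n d g (scal_op 1) = scal_op 1"
  by (rule faithful[OF cd]) (auto simp: assms in_KD_gauge in_KD_scal act_gauge act_scal[OF cd] mulv_inv2)

lemma gauge_inv:
  assumes "g \<noteq> 0" "in_KD n X"
  shows "gauge n d (inverse g) (gauge n d g X) = X"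
  by (rule faithful[OF cd]) (auto simp: assms in_KD_gauge act_gauge mulv_inv mulv_inv2)

lemma gauge_foldr:
  assumes "g \<noteq> 0" "\<forall>F\<in>set Fs. in_KD n F"
  shows "in_KD n (foldr (dcomp n d) Fs (scal_op 1)) \<and>
    gauge n d g (foldr (dcomp n d) Fs (scal_op 1)) = foldr (dcomp n d) (map (gauge n d g) Fs) (scal_op 1)"
  using assms(2)
proof (induction Fs)
  case Nil then show ?case by (simp add: in_KD_scal gauge_one[OF assms(1)])
next
  case (Cons F Fs)
  then show ?case by (simp add: in_KD_dcomp gauge_dcomp[OF assms(1)])
qed

lemma lk_scal_left:
  assumes "c \<noteq> 0"
  shows "lk (dcomp n d (scal_op c) Y) K = c * lk Y K"
proof -
  have "dcomp n d (scal_op c) Y = (\<Sum>I\<in>ky Y. sg I (c * lk Y I))"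
    using assms by (simp add: dcomp_def scal_op_def S_zero mbinom_refl dpow_zero[OF cd])
  also have "lk \<dots> K = (\<Sum>I\<in>ky Y. if I = K then c * lk Y I else 0)"
    by (simp add: lookup_sum lookup_single when_def)
  also have "\<dots> = c * lk Y K"
    by (subst sum.delta) (auto simp: in_keys_iff)
  finally show ?thesis .
qed

lemma lk_scal_right:
  assumes "c \<noteq> 0"
  shows "lk (dcomp n d X (scal_op c)) K =
    (\<Sum>J\<in>ky X. if mle K J then lk X J * of_nat (mbinom n J K) * dpow n d (J - K) c else 0)"
proof -
  have "lk (dcomp n d X (scal_op c)) K = (\<Sum>J\<in>ky X. \<Sum>M\<in>{M. mle M J}.
     if M = K then lk X J * of_nat (mbinom n J M) * dpow n d (J - M) c else 0)"
    using assms by (simp add: dcomp_def scal_op_def lookup_sum lookup_single when_def)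
  also have "\<dots> = (\<Sum>J\<in>ky X. if mle K J then lk X J * of_nat (mbinom n J K) * dpow n d (J - K) c else 0)"
    by (rule sum.cong[OF refl], subst sum.delta[OF finite_mle]) auto
  finally show ?thesis .
qed

lemma gauge_sym_ord:
  assumes g: "g \<noteq> 0" and X: "in_KD n X"
  shows "Sym (gauge n d g X) = Sym X \<and> ord (gauge n d g X) = ord X"
proof (cases "X = 0")
  case True
  then have "gauge n d g X = 0" using gauge_diff[of 0 0 g] by (simp add: in_KD_def)
  then show ?thesis using True by simp
next
  case False
  define m where "m = Max (mdeg ` ky X)"
  have Jle: "\<And>J. J \<in> ky X \<Longrightarrow> mdeg J \<le> m" unfolding m_def by simp
  have lk: "lk (gauge n d g X) K = inverse g *
    (\<Sum>J\<in>ky X. if mle K J then lk X J * of_nat (mbinom n J K) * dpow n d (J - K) g else 0)" for K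
    unfolding gauge_def using g by (simp add: lk_scal_left lk_scal_right)
  show ?thesis
  proof (rule sym_ord_eq[OF False m_def])
    fix K assume "m < mdeg K"
    then have "\<And>J. J \<in> ky X \<Longrightarrow> \<not> mle K J" using Jle mdeg_mono by (meson leD order_trans)
    then show "lk (gauge n d g X) K = 0" unfolding lk by simp
  next
    fix K assume K: "mdeg K = m"
    have "(\<Sum>J\<in>ky X. if mle K J then lk X J * of_nat (mbinom n J K) * dpow n d (J - K) g else 0)
        = (\<Sum>J\<in>ky X. if J = K then lk X K * g else 0)"
    proof (rule sum.cong[OF refl])
      fix J assume J: "J \<in> ky X"
      show "(if mle K J then lk X J * of_nat (mbinom n J K) * dpow n d (J - K) g else 0) =
        (if J = K then lk X K * g else 0)"
      proof (cases "mle K J")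
        case True
        then have "K = J" using mdeg_eq mdeg_mono Jle[OF J] K by (metis antisym)
        then show ?thesis using True by (simp add: mbinom_refl dpow_zero[OF cd])
      next
        case False
        then have "J \<noteq> K" by (auto simp: mle_def)
        then show ?thesis using False by simp
      qed
    qed
    also have "\<dots> = lk X K * g" by (subst sum.delta) (auto simp: in_keys_iff)
    finally show "lk (gauge n d g X) K = lk X K" unfolding lk using g by simp
  qed
qed

end




lemma gauge_fact:
  assumes cd: "commuting_derivations n d" and g: "g \<noteq> 0"
    and X: "in_KD n X" and f: "has_factorization n d X Ss"
  shows "has_factorization n d (gauge n d g X) Ss"
proof -
  obtain Fs where Fs: "length Fs = length Ss" "\<forall>F\<in>set Fs. in_KD n F" "map Sym Fs = Ss"
    "X = foldr (dcomp n d) Fs (scal_op 1)"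
    using f unfolding has_factorization_def by blast
  have "map Sym (map (gauge n d g) Fs) = map Sym Fs"
    using Fs(2) gauge_sym_ord[OF cd g] by simp
  moreover have "gauge n d g X = foldr (dcomp n d) (map (gauge n d g) Fs) (scal_op 1)"
    using gauge_foldr[OF cd g Fs(2)] Fs(4) by simp
  moreover have "\<forall>F\<in>set (map (gauge n d g) Fs). in_KD n F"
    using Fs(2) in_KD_gauge[OF cd] by auto
  ultimately show ?thesis unfolding has_factorization_def using Fs(1,3)
    by (intro exI[of _ "map (gauge n d g) Fs"]) simp
qed

theorem mainTheorem8:
  fixes n :: nat and d :: "nat \<Rightarrow> 'k::field \<Rightarrow> 'k"
    and L R :: "'k dop" and Ss :: "'k mpoly list" and g :: 'k
  assumes "commuting_derivations n d"
    and "in_KD n L"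
    and "\<forall>S\<in>set Ss. homogeneous S \<and> in_KD n S"
    and "Sym L = prod_list Ss"
    and "g \<noteq> 0"
    and "common_obstacle n d L Ss R"
  shows "common_obstacle n d (gauge n d g L) Ss (gauge n d g R)"
proof -
  note cd = assms(1) and g = assms(5) and L = assms(2)
  have R: "in_KD n R" and fR: "has_factorization n d (L - R) Ss"
    and minR: "\<And>R'. in_KD n R' \<Longrightarrow> has_factorization n d (L - R') Ss \<Longrightarrow> ord R \<le> ord R'"
    using assms(6) unfolding common_obstacle_def by auto
  have "gauge n d g L - gauge n d g R = gauge n d g (L - R)"
    using gauge_diff[OF cd L R] by simp
  then have f1: "has_factorization n d (gauge n d g L - gauge n d g R) Ss"
    using gauge_fact[OF cd g in_KD_diff[OF L R] fR] by simp
  have m: "ord (gauge n d g R) \<le> ord R'"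
    if R': "in_KD n R'" and fR': "has_factorization n d (gauge n d g L - R') Ss" for R'
  proof -
    have ig: "inverse g \<noteq> 0" using g by simp
    have GL: "in_KD n (gauge n d g L)" using in_KD_gauge[OF cd L] .
    have "L - gauge n d (inverse g) R' = gauge n d (inverse g) (gauge n d g L - R')"
      using gauge_diff[OF cd GL R', of "inverse g"] gauge_inv[OF cd g L] by simp
    then have "has_factorization n d (L - gauge n d (inverse g) R') Ss"
      using gauge_fact[OF cd ig in_KD_diff[OF GL R'] fR'] by simp
    then have "ord R \<le> ord (gauge n d (inverse g) R')"
      using minR in_KD_gauge[OF cd R'] by blast
    also have "\<dots> = ord R'" using gauge_sym_ord[OF cd ig R'] by simp
    finally show ?thesis using gauge_sym_ord[OF cd g R] by simp
  qed
  show ?thesis unfolding common_obstacle_def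
    using in_KD_gauge[OF cd R] f1 m by blast
qed



end
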